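(* There exist $\bar\tau\in(\tfrac12,1)$ and $\bar\rho,\bar R,\bar\phi,\bar\epsilon>0$ such that the following holds. Let $p,q\in\mathbb{H}^n\setminus\{0\}$, $t,\tilde t\ge1$, $R>1$, $T\ge t\tilde t$, $\epsilon\in(0,1)$, and $r\ge\tilde r\ge TR$ with $\tilde r\le\epsilon r$; suppose $q\in\partial_tB_r(p)$ and $0\in\partial_tB_r(p)\cap\partial_{\tilde t}B_{\tilde r}(q)$. Let $I(p)=\{i:\rho_i(p)<10T/r\}$. If $R>\bar R$, $\epsilon<\bar\epsilon$, $|\tau_p|\ge\bar\tau$ and $\max_{1\le i\le n}\phi_i(p,q)<\bar\phi$, then either there exists $i\notin I(p)$ with $\rho_i(q)<10T/\tilde r$, or $d(\hat p,\hat q)>\bar\rho$.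
   Context: $\mathbb{H}^n=\mathbb{C}^n\times\mathbb{R}$ with product $(z,\tau)(w,\sigma)=(z+w,\tau+\sigma+\tfrac12\operatorname{Im}\langle z,w\rangle)$, $\langle z,w\rangle=\sum_j\overline{z_j}w_j$, identity $0$; dilations $\delta_\lambda(z,\tau)=(\lambda z,\lambda^2\tau)$; $d(p,q)=\inf\{r>0:\delta_{1/r}(pq^{-1})\in B_{eucl}\}$ ($B_{eucl}$ the closed Euclidean unit ball in $\mathbb{R}^{2n+1}$). $B_r(p)=\{y:d(y,p)\le r\}$, $\partial B_r(p)=\{y:d(y,p)=r\}$, $\partial_tB_r(p)=\{y:d(y,\partial B_r(p))\le t\}$. For $p\ne0$ let $\hat p=\delta_{1/d(p,0)}p=(z_p,\tau_p)$, so $\|z_p\|^2+\tau_p^2=1$; write $(z_p)_j=\rho_j(p)e^{i\phi_j(p)}$ with $\rho_j(p)\ge0$, $\phi_j(p)\in(-\pi,\pi]$. For $p,q\ne0$, $\phi_j(p,q)\in[0,\pi]$ is the magnitude of the angle between $e^{i\phi_j(p)}$ and $e^{i\phi_j(q)}$. *)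

theory Defs
  imports "HOL-Analysis.Analysis"
begin

text \<open>Heisenberg group H^n = C^n x R; the dimension n is the cardinality of the finite index type 'n.\<close>
type_synonym 'n heis = "(complex ^ 'n) \<times> real"

definition hinner :: "complex ^ 'n::finite \<Rightarrow> complex ^ 'n \<Rightarrow> complex" where
  "hinner z w = (\<Sum>j\<in>UNIV. cnj (z $ j) * w $ j)"

definition hmult :: "'n::finite heis \<Rightarrow> 'n heis \<Rightarrow> 'n heis" where
  "hmult p q = (fst p + fst q, snd p + snd q + (1/2) * Im (hinner (fst p) (fst q)))"

definition hinv :: "'n::finite heis \<Rightarrow> 'n heis" where
  "hinv p = (- fst p, - snd p)"

definition hzero :: "'n::finite heis" where
  "hzero = (0, 0)"

definition hdil :: "real \<Rightarrow> 'n::finite heis \<Rightarrow> 'n heis" where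
  "hdil l p = (l *\<^sub>R fst p, l\<^sup>2 * snd p)"

definition in_eucl_ball :: "'n::finite heis \<Rightarrow> bool" where
  "in_eucl_ball p \<longleftrightarrow> (\<Sum>j\<in>UNIV. (cmod (fst p $ j))\<^sup>2) + (snd p)\<^sup>2 \<le> 1"

definition hdist :: "'n::finite heis \<Rightarrow> 'n heis \<Rightarrow> real" where
  "hdist p q = Inf {r. r > 0 \<and> in_eucl_ball (hdil (1/r) (hmult p (hinv q)))}"

definition hsphere :: "real \<Rightarrow> 'n::finite heis \<Rightarrow> 'n heis set" where
  "hsphere r p = {y. hdist y p = r}"

definition hsetdist :: "'n::finite heis \<Rightarrow> 'n heis set \<Rightarrow> real" where
  "hsetdist y S = Inf ((\<lambda>x. hdist y x) ` S)"

definition hshell :: "real \<Rightarrow> real \<Rightarrow> 'n::finite heis \<Rightarrow> 'n heis set" where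
  "hshell t r p = {y. hsetdist y (hsphere r p) \<le> t}"

definition hhat :: "'n::finite heis \<Rightarrow> 'n heis" where
  "hhat p = hdil (1 / hdist p hzero) p"

definition hrho :: "'n::finite heis \<Rightarrow> 'n \<Rightarrow> real" where
  "hrho p j = cmod (fst (hhat p) $ j)"

definition hphi :: "'n::finite heis \<Rightarrow> 'n \<Rightarrow> real" where
  "hphi p j = Arg (fst (hhat p) $ j)"

definition htau :: "'n::finite heis \<Rightarrow> real" where
  "htau p = snd (hhat p)"

text \<open>Magnitude in [0,pi] of the angle between e^{i phi_j(p)} and e^{i phi_j(q)}.\<close>
definition hphi2 :: "'n::finite heis \<Rightarrow> 'n heis \<Rightarrow> 'n \<Rightarrow> real" where
  "hphi2 p q j = arccos (cos (hphi p j - hphi q j))"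

end

theory Submission
  imports Defs
begin



definition nrm :: "'n::finite heis \<Rightarrow> real" where
 "nrm x = sqrt (((norm (fst x))\<^sup>2 + sqrt ((norm (fst x))^4 + 4*(snd x)\<^sup>2))/2)"

lemma norm_sq_sum: "(norm (v::complex^'n::finite))\<^sup>2 = (\<Sum>j\<in>UNIV. (cmod (v $ j))\<^sup>2)"
  unfolding norm_vec_def L2_set_def by (simp add: sum_nonneg)

lemma quad_char:
  fixes a b u :: real
  assumes "a \<ge> 0" "u > 0"
  shows "a*u + b\<^sup>2 \<le> u\<^sup>2 \<longleftrightarrow> (a + sqrt (a\<^sup>2 + 4*b\<^sup>2))/2 \<le> u"
proof -
  define S where "S = sqrt (a\<^sup>2 + 4*b\<^sup>2)"
  have S0: "S \<ge> 0" unfolding S_def by simp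
  have S2: "S\<^sup>2 = a\<^sup>2 + 4*b\<^sup>2" unfolding S_def by simp
  have aS: "a \<le> S" unfolding S_def by (rule real_le_rsqrt) simp
  have f1: "(u - (a+S)/2) * (u - (a-S)/2) = u\<^sup>2 - a*u + (a\<^sup>2 - S\<^sup>2)/4"
    by (simp add: field_simps power2_eq_square)
  have fact: "u\<^sup>2 - a*u - b\<^sup>2 = (u - (a+S)/2) * (u - (a-S)/2)"
    using S2 f1 by simp
  have pos: "u - (a-S)/2 > 0" using aS assms by simp
  show ?thesis
  proof
    assume "a*u + b\<^sup>2 \<le> u\<^sup>2"
    hence "(u - (a+S)/2) * (u - (a-S)/2) \<ge> 0" using fact by simp
    hence "u - (a+S)/2 \<ge> 0" using pos by (simp add: zero_le_mult_iff)
    thus "(a + sqrt (a\<^sup>2 + 4*b\<^sup>2))/2 \<le> u" unfolding S_def by simp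
  next
    assume "(a + sqrt (a\<^sup>2 + 4*b\<^sup>2))/2 \<le> u"
    hence "(u - (a+S)/2) * (u - (a-S)/2) \<ge> 0" using pos unfolding S_def by simp
    thus "a*u + b\<^sup>2 \<le> u\<^sup>2" using fact by simp
  qed
qed

lemma nrm_nonneg: "nrm x \<ge> 0" unfolding nrm_def by simp

lemma nrm_sq: "(nrm x)\<^sup>2 = ((norm (fst x))\<^sup>2 + sqrt ((norm (fst x))^4 + 4*(snd x)\<^sup>2))/2"
  unfolding nrm_def by (simp add: add_nonneg_nonneg)

lemma nrm_le_iff:
  assumes "\<rho> > 0"
  shows "nrm x \<le> \<rho> \<longleftrightarrow> (norm (fst x))\<^sup>2 * \<rho>\<^sup>2 + (snd x)\<^sup>2 \<le> \<rho>^4"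
proof -
  have "nrm x \<le> \<rho> \<longleftrightarrow> (nrm x)\<^sup>2 \<le> \<rho>\<^sup>2"
    using abs_le_square_iff[of "nrm x" \<rho>] nrm_nonneg[of x] assms by simp
  also have "\<dots> \<longleftrightarrow> (norm (fst x))\<^sup>2 * \<rho>\<^sup>2 + (snd x)\<^sup>2 \<le> (\<rho>\<^sup>2)\<^sup>2"
    unfolding nrm_sq using quad_char[of "(norm (fst x))\<^sup>2" "\<rho>\<^sup>2" "snd x"] assms
    by (simp add: power_mult_distrib power2_eq_square[of "(norm (fst x))\<^sup>2"] mult.commute)
  finally show ?thesis by (simp add: power2_eq_square power4_eq_xxxx mult.assoc)
qed

lemma ball_iff:
  assumes "\<rho> > 0"
  shows "in_eucl_ball (hdil (1/\<rho>) x) \<longleftrightarrow> nrm x \<le> \<rho>"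
proof -
  have "in_eucl_ball (hdil (1/\<rho>) x) \<longleftrightarrow> (norm ((1/\<rho>) *\<^sub>R fst x))\<^sup>2 + ((1/\<rho>)\<^sup>2 * snd x)\<^sup>2 \<le> 1"
    unfolding in_eucl_ball_def hdil_def fst_conv snd_conv norm_sq_sum[symmetric] by (rule refl)
  also have "\<dots> \<longleftrightarrow> (norm (fst x))\<^sup>2 / \<rho>\<^sup>2 + (snd x)\<^sup>2 / \<rho>^4 \<le> 1"
    using assms by (simp add: power_mult_distrib power_divide)
  also have "\<dots> \<longleftrightarrow> ((norm (fst x))\<^sup>2 * \<rho>\<^sup>2 + (snd x)\<^sup>2) / \<rho>^4 \<le> 1"
    using assms by (simp add: add_divide_distrib eval_nat_numeral)
  also have "\<dots> \<longleftrightarrow> (norm (fst x))\<^sup>2 * \<rho>\<^sup>2 + (snd x)\<^sup>2 \<le> \<rho>^4"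
    using assms by (simp add: divide_le_eq_1_pos)
  finally show ?thesis using nrm_le_iff[OF assms, of x] by simp
qed

lemma hdist_nrm: "hdist p q = nrm (hmult p (hinv q))"
proof -
  define m where "m = nrm (hmult p (hinv q))"
  have m0: "m \<ge> 0" unfolding m_def by (rule nrm_nonneg)
  have "{r. r > 0 \<and> in_eucl_ball (hdil (1/r) (hmult p (hinv q)))} = {r. r > 0 \<and> m \<le> r}"
    using ball_iff unfolding m_def by blast
  also have "\<dots> = (if m = 0 then {0<..} else {m..})" using m0 by auto
  finally show ?thesis unfolding hdist_def m_def[symmetric] by simp
qed




lemma nrm_eq: "(norm (fst x))\<^sup>2 * (nrm x)\<^sup>2 + (snd x)\<^sup>2 = (nrm x)^4"
proof -
  define a where "a = (norm (fst x))\<^sup>2"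
  define b where "b = snd x"
  define S where "S = sqrt (a\<^sup>2 + 4*b\<^sup>2)"
  have S2: "S\<^sup>2 = a\<^sup>2 + 4*b\<^sup>2" unfolding S_def by simp
  have N2: "(nrm x)\<^sup>2 = (a + S)/2" unfolding nrm_sq a_def b_def S_def by (simp add: power2_eq_square eval_nat_numeral)
  have "(nrm x)^4 = ((nrm x)\<^sup>2)\<^sup>2" by (simp add: power_mult[symmetric])
  also have "\<dots> = ((a+S)/2)\<^sup>2" by (simp only: N2)
  also have "\<dots> = a * ((a+S)/2) + b\<^sup>2" using S2 by (simp add: power2_eq_square field_simps)
  finally show ?thesis using N2 unfolding a_def b_def by simp
qed

lemma nrm_bounds: "(norm (fst x))\<^sup>2 \<le> (nrm x)\<^sup>2" "\<bar>snd x\<bar> \<le> (nrm x)\<^sup>2"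
  "(nrm x)\<^sup>2 \<le> (norm (fst x))\<^sup>2 + \<bar>snd x\<bar>"
proof -
  define a where "a = (norm (fst x))\<^sup>2"
  define b where "b = snd x"
  define S where "S = sqrt (a\<^sup>2 + 4*b\<^sup>2)"
  have a0: "a \<ge> 0" unfolding a_def by simp
  have N2: "(nrm x)\<^sup>2 = (a + S)/2" unfolding nrm_sq a_def b_def S_def by (simp add: power2_eq_square eval_nat_numeral)
  have aS: "a \<le> S" unfolding S_def by (rule real_le_rsqrt) simp
  have bS: "2*\<bar>b\<bar> \<le> S" unfolding S_def by (rule real_le_rsqrt) (simp add: power2_eq_square)
  have Sle: "S \<le> a + 2*\<bar>b\<bar>" unfolding S_def
  proof (rule real_le_lsqrt)
    show "0 \<le> a + 2*\<bar>b\<bar>" using a0 by simp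
    have "0 \<le> 4*a*\<bar>b\<bar>" using a0 by simp
    moreover have "b\<^sup>2 = \<bar>b\<bar>\<^sup>2" by simp
    ultimately show "a\<^sup>2 + 4*b\<^sup>2 \<le> (a + 2*\<bar>b\<bar>)\<^sup>2" by (simp add: power2_eq_square algebra_simps)
  qed
  show "(norm (fst x))\<^sup>2 \<le> (nrm x)\<^sup>2" using N2 aS unfolding a_def by simp
  show "\<bar>snd x\<bar> \<le> (nrm x)\<^sup>2" using N2 bS a0 unfolding b_def by simp
  show "(nrm x)\<^sup>2 \<le> (norm (fst x))\<^sup>2 + \<bar>snd x\<bar>" using N2 Sle unfolding a_def b_def by simp
qed

lemma nrm_le_imp: assumes "nrm x \<le> c" shows "norm (fst x) \<le> c" "\<bar>snd x\<bar> \<le> c\<^sup>2"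
proof -
  have c0: "c \<ge> 0" using assms nrm_nonneg order_trans by blast
  have "(nrm x)\<^sup>2 \<le> c\<^sup>2" using assms nrm_nonneg power_mono by blast
  thus "\<bar>snd x\<bar> \<le> c\<^sup>2" using nrm_bounds(2)[of x] by simp
  have "(norm (fst x))\<^sup>2 \<le> c\<^sup>2" using \<open>(nrm x)\<^sup>2 \<le> c\<^sup>2\<close> nrm_bounds(1)[of x] by simp
  thus "norm (fst x) \<le> c" using c0 by (rule power2_le_imp_le)
qed

lemma abs_half_aux: "\<bar>S - S'\<bar> \<le> \<bar>a-a'\<bar> + 2*\<bar>c\<bar> \<Longrightarrow> N = (a+S)/2 \<Longrightarrow> N' = (a'+S')/2 \<Longrightarrow> \<bar>N - N'\<bar> \<le> \<bar>a-a'\<bar> + \<bar>c::real\<bar>"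
  by (simp add: abs_le_iff abs_if split: if_splits)

lemma nrm_lip: "\<bar>(nrm x)\<^sup>2 - (nrm y)\<^sup>2\<bar> \<le> \<bar>(norm (fst x))\<^sup>2 - (norm (fst y))\<^sup>2\<bar> + \<bar>snd x - snd y\<bar>"
proof -
  define a where "a = (norm (fst x))\<^sup>2"
  define b where "b = snd x"
  define a' where "a' = (norm (fst y))\<^sup>2"
  define b' where "b' = snd y"
  have N2: "(nrm x)\<^sup>2 = (a + cmod (Complex a (2*b)))/2" unfolding nrm_sq a_def b_def cmod_def
    by (simp add: power2_eq_square eval_nat_numeral)
  have N2': "(nrm y)\<^sup>2 = (a' + cmod (Complex a' (2*b')))/2" unfolding nrm_sq a'_def b'_def cmod_def
    by (simp add: power2_eq_square eval_nat_numeral)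
  have "\<bar>cmod (Complex a (2*b)) - cmod (Complex a' (2*b'))\<bar> \<le> cmod (Complex a (2*b) - Complex a' (2*b'))"
    by (rule norm_triangle_ineq3)
  also have "\<dots> \<le> \<bar>a - a'\<bar> + \<bar>2*b - 2*b'\<bar>" using cmod_le[of "Complex a (2*b) - Complex a' (2*b')"] by simp
  also have "\<bar>2*b - 2*b'\<bar> = 2*\<bar>b - b'\<bar>"
    by (metis abs_mult abs_numeral right_diff_distrib)
  finally have "\<bar>cmod (Complex a (2*b)) - cmod (Complex a' (2*b'))\<bar> \<le> \<bar>a - a'\<bar> + 2*\<bar>b - b'\<bar>" by simp
  thus ?thesis using N2 N2' unfolding a_def[symmetric] b_def[symmetric] a'_def[symmetric] b'_def[symmetric]
    by (rule abs_half_aux)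
qed

lemma nrm_vert: "r \<ge> 0 \<Longrightarrow> nrm ((0::complex^'n::finite), r\<^sup>2) = r"
  unfolding nrm_def by (simp add: power_mult_distrib real_sqrt_mult eval_nat_numeral)

lemma nrm_zero_iff: "nrm x = 0 \<longleftrightarrow> x = (0,0)"
proof
  assume "nrm x = 0"
  hence "(norm (fst x))\<^sup>2 \<le> 0" "\<bar>snd x\<bar> \<le> 0" using nrm_bounds[of x] by auto
  thus "x = (0,0)" by (cases x) auto
qed (simp add: nrm_def)

lemma nrm_neg: "nrm (-z, -s) = nrm (z, s)" unfolding nrm_def by simp

lemma hinner_le: "cmod (hinner a b) \<le> norm a * norm b"
proof -
  have "cmod (hinner a b) \<le> (\<Sum>j\<in>UNIV. cmod (cnj (a$j) * b$j))" unfolding hinner_def by (rule norm_sum)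
  also have "\<dots> = (\<Sum>j\<in>UNIV. \<bar>cmod (a$j)\<bar> * \<bar>cmod (b$j)\<bar>)" by (simp add: norm_mult)
  also have "\<dots> \<le> L2_set (\<lambda>j. cmod (a$j)) UNIV * L2_set (\<lambda>j. cmod (b$j)) UNIV" by (rule L2_set_mult_ineq)
  finally show ?thesis by (simp add: norm_vec_def)
qed

lemma hinner_Im_le: "\<bar>Im (hinner a b)\<bar> \<le> norm a * norm b"
  using hinner_le[of a b] abs_Im_le_cmod order_trans by blast
lemma hinner_Re_le: "\<bar>Re (hinner a b)\<bar> \<le> norm a * norm b"
  using hinner_le[of a b] abs_Re_le_cmod order_trans by blast

lemma hinner_self_Im: "Im (hinner a a) = 0"
  unfolding hinner_def by (simp add: Im_sum)

lemma hinner_diff_right: "hinner a (b - c) = hinner a b - hinner a c"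
  unfolding hinner_def by (simp add: algebra_simps sum_subtractf)
lemma hinner_diff_left: "hinner (b - c) a = hinner b a - hinner c a"
  unfolding hinner_def by (simp add: algebra_simps sum_subtractf)
lemma hinner_minus_right: "hinner a (- b) = - hinner a b"
  unfolding hinner_def by (simp add: sum_negf)
lemma hinner_minus_left: "hinner (- a) b = - hinner a b"
  unfolding hinner_def by (simp add: sum_negf)
lemma hinner_zero_left: "hinner 0 b = 0" unfolding hinner_def by simp
lemma hinner_zero_right: "hinner b 0 = 0" unfolding hinner_def by simp
lemma hinner_scale: "hinner (c *\<^sub>R a) (d *\<^sub>R b) = of_real (c*d) * hinner a b"
proof -
  have "\<And>j. cnj ((c *\<^sub>R a)$j) * (d *\<^sub>R b)$j = of_real (c*d) * (cnj (a$j) * b$j)"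
    by (simp only: vector_scaleR_component) (simp add: scaleR_conv_of_real)
  thus ?thesis unfolding hinner_def by (simp add: sum_distrib_left)
qed

lemma norm_diff_sq: "(norm (w - z))\<^sup>2 = (norm z)\<^sup>2 - 2 * Re (hinner z w) + (norm w)\<^sup>2"
proof -
  have c: "\<And>u v::complex. (cmod (v - u))\<^sup>2 = (cmod u)\<^sup>2 - 2 * Re (cnj u * v) + (cmod v)\<^sup>2"
    by (simp add: cmod_power2) (simp add: power2_eq_square algebra_simps)
  have "(norm (w - z))\<^sup>2 = (\<Sum>j\<in>UNIV. (cmod (z$j))\<^sup>2 - 2 * Re (cnj (z$j) * w$j) + (cmod (w$j))\<^sup>2)"
    unfolding norm_sq_sum by (rule sum.cong) (simp_all add: c)
  also have "\<dots> = (\<Sum>j\<in>UNIV. (cmod (z$j))\<^sup>2) - 2 * (\<Sum>j\<in>UNIV. Re (cnj (z$j) * w$j)) + (\<Sum>j\<in>UNIV. (cmod (w$j))\<^sup>2)"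
    by (simp add: sum.distrib sum_subtractf sum_distrib_left)
  finally show ?thesis unfolding norm_sq_sum hinner_def by (simp add: Re_sum)
qed




definition lc :: "real \<Rightarrow> real \<Rightarrow> complex \<Rightarrow> complex \<Rightarrow> real" where
  "lc r2 \<tau> a x = -2*r2*Re(cnj a * x) + \<tau>*Im(cnj x * a)"

lemma lc_abs: "\<bar>lc r2 \<tau> a x\<bar> \<le> (2*\<bar>r2\<bar> + \<bar>\<tau>\<bar>) * (cmod a * cmod x)"
proof -
  have "\<bar>Re(cnj a * x)\<bar> \<le> cmod a * cmod x" by (metis abs_Re_le_cmod complex_mod_cnj norm_mult)
  moreover have "\<bar>Im(cnj x * a)\<bar> \<le> cmod a * cmod x" by (metis abs_Im_le_cmod complex_mod_cnj mult.commute norm_mult)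
  ultimately have "\<bar>-2*r2*Re(cnj a * x)\<bar> \<le> 2*\<bar>r2\<bar>*(cmod a * cmod x)" "\<bar>\<tau>*Im(cnj x * a)\<bar> \<le> \<bar>\<tau>\<bar>*(cmod a * cmod x)"
    by (auto simp: abs_mult intro!: mult_left_mono)
  thus ?thesis unfolding lc_def by (simp add: algebra_simps)
qed

lemma lc_add: "lc r2 \<tau> a (x + y) = lc r2 \<tau> a x + lc r2 \<tau> a y"
  unfolding lc_def by (simp add: algebra_simps)

lemma coord:
  fixes a w u v :: complex and r2 \<tau> t T :: real
  assumes r2: "r2 \<ge> 0" and tau: "\<bar>\<tau>\<bar> \<le> 11/10 * r2"
    and re: "Re (cnj a * w) \<ge> 995/1000 * (cmod a * cmod w)"
    and im: "\<bar>Im (cnj w * a)\<bar> \<le> 1/10 * (cmod a * cmod w)"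
    and u: "cmod u \<le> 2*t" and v: "cmod v \<le> 2*t" and t: "t \<ge> 0" and T: "T \<ge> 0"
    and cases: "cmod a \<le> 11*T \<or> cmod w \<ge> 9*t"
  shows "lc r2 \<tau> a w + lc r2 \<tau> a u - lc r2 \<tau> a v \<le> 150 * r2 * T * t"
proof -
  define P where "P = cmod a * cmod w"
  have P0: "P \<ge> 0" unfolding P_def by simp
  have lw: "lc r2 \<tau> a w \<le> -(188/100) * r2 * P"
  proof -
    have "2*r2*(995/1000 * P) \<le> 2*r2*Re(cnj a * w)" unfolding P_def by (rule mult_left_mono[OF re]) (use r2 in simp)
    hence "-2*r2*Re(cnj a * w) \<le> -2*r2*(995/1000 * P)" by linarith
    moreover have "\<tau>*Im(cnj w * a) \<le> 11/10 * r2 * (1/10 * P)"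
    proof -
      have "\<tau>*Im(cnj w * a) \<le> \<bar>\<tau>\<bar> * \<bar>Im(cnj w * a)\<bar>" by (simp add: abs_mult[symmetric])
      also have "\<dots> \<le> 11/10 * r2 * (1/10 * P)" using tau im unfolding P_def
        by (intro mult_mono) auto
      finally show ?thesis .
    qed
    ultimately show ?thesis unfolding lc_def by linarith
  qed
  have K: "2*\<bar>r2\<bar> + \<bar>\<tau>\<bar> \<le> 31/10 * r2" using r2 tau by simp
  have lu: "\<bar>lc r2 \<tau> a u\<bar> \<le> 31/10 * r2 * (cmod a * cmod u)"
    using order_trans[OF lc_abs[of r2 \<tau> a u] mult_right_mono[OF K]] by simp
  have lv: "\<bar>lc r2 \<tau> a v\<bar> \<le> 31/10 * r2 * (cmod a * cmod v)"
    using order_trans[OF lc_abs[of r2 \<tau> a v] mult_right_mono[OF K]] by simp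
  from cases show ?thesis
  proof
    assume a: "cmod a \<le> 11*T"
    have "0 \<le> r2 * P" using r2 P0 by simp
    hence l1: "lc r2 \<tau> a w \<le> 0" using lw by linarith
    have "cmod a * cmod u \<le> 11*T*(2*t)" using a u T by (intro mult_mono) auto
    hence l2: "31/10 * r2 * (cmod a * cmod u) \<le> 31/10 * r2 * (11*T*(2*t))" using r2 by (intro mult_left_mono) auto
    have "cmod a * cmod v \<le> 11*T*(2*t)" using a v T by (intro mult_mono) auto
    hence l3: "31/10 * r2 * (cmod a * cmod v) \<le> 31/10 * r2 * (11*T*(2*t))" using r2 by (intro mult_left_mono) auto
    have "lc r2 \<tau> a w + lc r2 \<tau> a u - lc r2 \<tau> a v \<le> 31/10 * r2 * (11*T*(2*t)) + 31/10 * r2 * (11*T*(2*t))"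
      using l1 l2 l3 lu lv by linarith
    also have "\<dots> \<le> 150 * r2 * T * t" using r2 T t by (simp add: algebra_simps)
    finally show ?thesis .
  next
    assume w: "cmod w \<ge> 9*t"
    have "cmod u \<le> 2/9 * cmod w" "cmod v \<le> 2/9 * cmod w" using u v w by auto
    hence "cmod a * cmod u \<le> cmod a * (2/9 * cmod w)" "cmod a * cmod v \<le> cmod a * (2/9 * cmod w)"
      using mult_left_mono norm_ge_zero by blast+
    hence X: "cmod a * cmod u \<le> 2/9 * P" "cmod a * cmod v \<le> 2/9 * P" unfolding P_def by (simp_all add: algebra_simps)
    have "31/10 * r2 * (cmod a * cmod u) \<le> 31/10 * r2 * (2/9*P)"
      by (rule mult_left_mono[OF X(1)]) (use r2 in simp)
    moreover have "31/10 * r2 * (cmod a * cmod v) \<le> 31/10 * r2 * (2/9*P)"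
      by (rule mult_left_mono[OF X(2)]) (use r2 in simp)
    ultimately have "lc r2 \<tau> a w + lc r2 \<tau> a u - lc r2 \<tau> a v \<le> -(188/100) * r2 * P + 31/10 * r2 * (2/9*P) + 31/10 * r2 * (2/9*P)"
      using lu lv lw by linarith
    also have "\<dots> \<le> 0" using r2 P0 by (simp add: algebra_simps)
    also have "0 \<le> 150 * r2 * T * t" using r2 T t by simp
    finally show ?thesis .
  qed
qed




lemma sq_le_of: "\<bar>x::real\<bar> \<le> a \<Longrightarrow> x\<^sup>2 \<le> a\<^sup>2"
  by (metis abs_ge_zero order_trans power2_abs power_mono)

lemma identity_y:
  "(norm (wy - z))\<^sup>2 * r\<^sup>2 + (hy - \<tau> - 1/2*Im (hinner wy z))\<^sup>2
   = (norm z)\<^sup>2 * r\<^sup>2 + \<tau>\<^sup>2 + (-2*r\<^sup>2*Re (hinner z wy) + \<tau>*Im (hinner wy z))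
     + (r\<^sup>2*(norm wy)\<^sup>2 + (hy - 1/2*Im (hinner wy z))\<^sup>2 - 2*\<tau>*hy)"
  unfolding norm_diff_sq by (simp add: power2_eq_square algebra_simps)

lemma Lsum_eq:
  "-2*r2*Re (hinner z v) + \<tau>*Im (hinner v z) = (\<Sum>i\<in>UNIV. lc r2 \<tau> (z$i) (v$i))"
proof -
  have "(\<Sum>i\<in>UNIV. lc r2 \<tau> (z$i) (v$i)) = (\<Sum>i\<in>UNIV. -2*r2*Re(cnj(z$i)*(v$i))) + (\<Sum>i\<in>UNIV. \<tau>*Im(cnj(v$i)*(z$i)))"
    unfolding lc_def by (rule sum.distrib)
  also have "\<dots> = -2*r2*(\<Sum>i\<in>UNIV. Re(cnj(z$i)*(v$i))) + \<tau>*(\<Sum>i\<in>UNIV. Im(cnj(v$i)*(z$i)))"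
    by (simp only: sum_distrib_left)
  also have "\<dots> = -2*r2*Re (hinner z v) + \<tau>*Im (hinner v z)"
    unfolding hinner_def by (simp only: Re_sum Im_sum)
  finally show ?thesis by simp
qed

lemma comp_le: "cmod (v$i) \<le> norm (v::complex^'n::finite)"
  unfolding norm_vec_def by (rule member_le_L2_set) simp_all

lemma core_L:
  fixes z w w0 w1 :: "complex^'n::finite"
  assumes r2: "r2 \<ge> 0" and tau: "\<bar>\<tau>\<bar> \<le> 11/10 * r2"
    and ang: "\<forall>i. Re (cnj (z$i) * (w$i)) \<ge> 995/1000*(cmod (z$i) * cmod (w$i)) \<and> \<bar>Im (cnj (w$i) * (z$i))\<bar> \<le> 1/10*(cmod (z$i) * cmod (w$i))"
    and cs: "\<forall>i. cmod (z$i) \<le> 11*T \<or> cmod (w$i) \<ge> 9*t"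
    and u: "norm (w1 - w) \<le> 2*t" and v: "norm w0 \<le> 2*t" and t: "t \<ge> 0" and T: "T \<ge> 0"
  shows "(\<Sum>i\<in>UNIV. lc r2 \<tau> (z$i) (w1$i)) - (\<Sum>i\<in>UNIV. lc r2 \<tau> (z$i) (w0$i)) \<le> real CARD('n) * (150 * r2 * T * t)"
proof -
  have "(\<Sum>i\<in>UNIV. lc r2 \<tau> (z$i) (w1$i)) - (\<Sum>i\<in>UNIV. lc r2 \<tau> (z$i) (w0$i))
      = (\<Sum>i\<in>UNIV. lc r2 \<tau> (z$i) (w$i) + lc r2 \<tau> (z$i) ((w1 - w)$i) - lc r2 \<tau> (z$i) (w0$i))"
  proof -
    have "\<And>i. lc r2 \<tau> (z$i) (w1$i) = lc r2 \<tau> (z$i) (w$i) + lc r2 \<tau> (z$i) ((w1 - w)$i)"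
      using lc_add[of r2 \<tau> "z$i" "w$i" "(w1 - w)$i" for i] by simp
    thus ?thesis by (simp add: sum.distrib sum_subtractf)
  qed
  also have "\<dots> \<le> (\<Sum>i\<in>(UNIV::'n set). 150 * r2 * T * t)"
  proof (rule sum_mono)
    fix i :: 'n
    show "lc r2 \<tau> (z$i) (w$i) + lc r2 \<tau> (z$i) ((w1 - w)$i) - lc r2 \<tau> (z$i) (w0$i) \<le> 150 * r2 * T * t"
    proof (rule coord[OF r2 tau])
      show "Re (cnj (z$i) * (w$i)) \<ge> 995/1000*(cmod (z$i) * cmod (w$i))" using ang by blast
      show "\<bar>Im (cnj (w$i) * (z$i))\<bar> \<le> 1/10*(cmod (z$i) * cmod (w$i))" using ang by blast
      have "cmod ((w1 - w)$i) \<le> norm (w1 - w)" by (rule comp_le)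
      thus "cmod ((w1 - w)$i) \<le> 2*t" using u by linarith
      have "cmod (w0$i) \<le> norm w0" by (rule comp_le)
      thus "cmod (w0$i) \<le> 2*t" using v by linarith
      show "cmod (z$i) \<le> 11*T \<or> cmod (w$i) \<ge> 9*t" using cs by blast
    qed (use t T in auto)
  qed
  also have "\<dots> = real CARD('n) * (150 * r2 * T * t)" by simp
  finally show ?thesis .
qed




lemma abs_aux1: "\<bar>a - b/2\<bar> \<le> e1 \<Longrightarrow> \<bar>b\<bar> \<le> e2 \<Longrightarrow> \<bar>a::real\<bar> \<le> e1 + e2/2"
  by (simp add: abs_le_iff abs_if split: if_splits)

lemma abs_aux2: "\<bar>a - b - c/2\<bar> \<le> e1 \<Longrightarrow> \<bar>c\<bar> \<le> e2 \<Longrightarrow> \<bar>b - a::real\<bar> \<le> e1 + e2/2"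
  by (simp add: abs_le_iff abs_if split: if_splits)

lemma sq_aux: "(a - b/2)\<^sup>2 \<le> 2*a\<^sup>2 + 1/2*(b::real)\<^sup>2"
proof -
  have "0 \<le> (a + b/2)\<^sup>2" by simp
  thus ?thesis by (simp add: power2_eq_square algebra_simps)
qed

lemma abs_tri_aux: "\<bar>a::real\<bar> \<le> \<bar>b\<bar> + \<bar>a - b\<bar>" by arith

lemma core:
  fixes z w w0 w1 :: "complex^'n::finite" and \<tau> \<sigma> h0 h1 Np Nq r r' t t' T \<epsilon> :: real
  assumes Np: "Np > 0" and Nq: "Nq > 0"
  and eqp: "(norm z)\<^sup>2 * Np\<^sup>2 + \<tau>\<^sup>2 = Np^4"
  and eqq: "(norm w)\<^sup>2 * Nq\<^sup>2 + \<sigma>\<^sup>2 = Nq^4"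
  and y0: "(norm (w0 - z))\<^sup>2 * r\<^sup>2 + (h0 - \<tau> - 1/2*Im (hinner w0 z))\<^sup>2 = r^4"
  and y1: "(norm (w1 - z))\<^sup>2 * r\<^sup>2 + (h1 - \<tau> - 1/2*Im (hinner w1 z))\<^sup>2 = r^4"
  and b0: "norm w0 \<le> 2*t" "\<bar>h0\<bar> \<le> (2*t)\<^sup>2"
  and b1: "norm (w - w1) \<le> 2*t" "\<bar>\<sigma> - h1 - 1/2*Im (hinner w w1)\<bar> \<le> (2*t)\<^sup>2"
  and np: "\<bar>r - Np\<bar> \<le> 10*t" and nq: "\<bar>r' - Nq\<bar> \<le> 10*t'"
  and tt: "1 \<le> t" "1 \<le> t'" "t*t' \<le> T"
  and K: "1000*(real CARD('n)+1)*T \<le> r'"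
  and rr: "r' \<le> \<epsilon>*r" "\<epsilon> \<le> 1/100" "0 < \<epsilon>" "0 < r'"
  and tau: "\<bar>(1/Np)\<^sup>2*\<tau>\<bar> \<ge> 99/100"
  and close: "norm ((1/Np) *\<^sub>R z - (1/Nq) *\<^sub>R w) \<le> 1/100"
      "\<bar>(1/Np)\<^sup>2*\<tau> - (1/Nq)\<^sup>2*\<sigma> - 1/2*Im (hinner ((1/Np) *\<^sub>R z) ((1/Nq) *\<^sub>R w))\<bar> \<le> 1/10000"
  and ang: "\<forall>i. Re (cnj (z$i) * (w$i)) \<ge> 995/1000*(cmod (z$i) * cmod (w$i)) \<and> \<bar>Im (cnj (w$i) * (z$i))\<bar> \<le> 1/10*(cmod (z$i) * cmod (w$i))"
  and cs: "\<forall>i. cmod (z$i)/Np < 10*T/r \<or> cmod (w$i)/Nq \<ge> 10*T/r'"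
  shows False
proof -
  have t0: "0 \<le> t" using tt by simp
  have tT: "t \<le> T" using mult_left_mono[OF tt(2) t0] tt(3) by simp
  have "1*t' \<le> t*t'" by (rule mult_right_mono[OF tt(1)]) (use tt in simp)
  hence t'T: "t' \<le> T" using tt by linarith
  have T1: "1 \<le> T" using tT tt by simp
  define c where "c = real CARD('n)"
  have c0: "c \<ge> 0" unfolding c_def by simp
  have K': "1000*(c+1)*T \<le> r'" using K unfolding c_def .
  have "1000*T \<le> 1000*(c+1)*T" using c0 T1 by (simp add: mult_right_mono)
  hence T1000: "T \<le> r'/1000" using K' by simp
  have "1000*c*T \<le> 1000*(c+1)*T" using c0 T1 by (simp add: mult_right_mono)
  hence cT: "c*T \<le> r'/1000" using K' by simp
  have t1000: "t \<le> r'/1000" using tT T1000 by simp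
  have "\<epsilon>*r > 0" using rr by linarith
  hence r0: "r > 0" using rr(3) zero_less_mult_pos by blast
  have "\<epsilon>*r \<le> r/100" using rr(2) r0 by (simp add: mult_right_mono)
  hence r100: "100*r' \<le> r" using rr(1) by simp
  have Npl: "99/100*r \<le> Np" "Np \<le> 101/100*r" using np tT T1000 r100 by (simp_all add: abs_le_iff)
  have Nql: "99/100*r' \<le> Nq" "Nq \<le> 101/100*r'" using nq t'T T1000 by (simp_all add: abs_le_iff)
  define P where "P = r\<^sup>2 * r'\<^sup>2"
  have P0: "P > 0" unfolding P_def using r0 rr by simp
  have taule: "\<bar>\<tau>\<bar> \<le> Np\<^sup>2"
  proof -
    have "\<tau>\<^sup>2 \<le> (Np\<^sup>2)\<^sup>2" using eqp by (simp add: power_mult[symmetric]) (smt (verit) mult_nonneg_nonneg zero_le_power2)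
    thus ?thesis by (metis abs_ge_zero power2_abs power2_le_imp_le zero_le_power2)
  qed
  have Np2: "Np\<^sup>2 \<le> 103/100 * r\<^sup>2"
  proof -
    have "Np\<^sup>2 \<le> (101/100*r)\<^sup>2" using Npl Np by (intro power_mono) auto
    moreover have "(101/100*r)\<^sup>2 = 10201/10000*r\<^sup>2" by (simp add: power2_eq_square)
    ultimately show ?thesis using zero_le_power2[of "r"] by linarith
  qed
  have Np2l: "98/100 * r\<^sup>2 \<le> Np\<^sup>2"
  proof -
    have "(99/100*r)\<^sup>2 \<le> Np\<^sup>2" using Npl r0 by (intro power_mono) auto
    moreover have "(99/100*r)\<^sup>2 = 9801/10000*r\<^sup>2" by (simp add: power2_eq_square)
    ultimately show ?thesis using zero_le_power2[of "r"] by linarith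
  qed
  have Nq2: "Nq\<^sup>2 \<le> 103/100 * r'\<^sup>2"
  proof -
    have "Nq\<^sup>2 \<le> (101/100*r')\<^sup>2" using Nql Nq by (intro power_mono) auto
    moreover have "(101/100*r')\<^sup>2 = 10201/10000*r'\<^sup>2" by (simp add: power2_eq_square)
    ultimately show ?thesis using zero_le_power2[of "r'"] by linarith
  qed
  have Nq2l: "98/100 * r'\<^sup>2 \<le> Nq\<^sup>2"
  proof -
    have "(99/100*r')\<^sup>2 \<le> Nq\<^sup>2" using Nql rr by (intro power_mono) auto
    moreover have "(99/100*r')\<^sup>2 = 9801/10000*r'\<^sup>2" by (simp add: power2_eq_square)
    ultimately show ?thesis using zero_le_power2[of "r'"] by linarith
  qed
  have tau2: "\<bar>\<tau>\<bar> \<le> 103/100 * r\<^sup>2" using taule Np2 by simp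

  have tauNp: "99/100 * Np\<^sup>2 \<le> \<bar>\<tau>\<bar>"
  proof -
    have "\<bar>(1/Np)\<^sup>2*\<tau>\<bar> = \<bar>\<tau>\<bar>/Np\<^sup>2" by (simp add: abs_mult power_divide)
    thus ?thesis using tau Np by (simp add: le_divide_eq)
  qed
  have tausq: "9801/10000 * (Np\<^sup>2)\<^sup>2 \<le> \<tau>\<^sup>2"
  proof -
    have "(99/100 * Np\<^sup>2)\<^sup>2 \<le> \<bar>\<tau>\<bar>\<^sup>2" using tauNp by (intro power_mono) auto
    thus ?thesis by (simp only: power_mult_distrib power2_abs) (simp add: power_divide)
  qed
  have nz: "norm z \<le> 15/100 * Np"
  proof -
    have "(norm z)\<^sup>2 * Np\<^sup>2 \<le> 199/10000 * (Np\<^sup>2)\<^sup>2" using eqp tausq by (simp add: power_mult[symmetric])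
    hence "(norm z)\<^sup>2 * Np\<^sup>2 \<le> (199/10000 * Np\<^sup>2) * Np\<^sup>2" by (simp add: power2_eq_square)
    hence "(norm z)\<^sup>2 \<le> 199/10000 * Np\<^sup>2" using Np by simp
    also have "\<dots> \<le> (15/100 * Np)\<^sup>2" by (simp only: power_mult_distrib) (simp add: power_divide)
    finally have "(norm z)\<^sup>2 \<le> (15/100 * Np)\<^sup>2" .
    thus ?thesis by (rule power2_le_imp_le) (use Np in simp)
  qed
  have nz': "norm z \<le> 16/100 * r" using nz Npl r0 by linarith
  have nzh: "norm ((1/Np) *\<^sub>R z) = norm z / Np" using Np by simp
  have nwh: "norm ((1/Nq) *\<^sub>R w) = norm w / Nq" using Nq by simp
  have "norm ((1/Nq) *\<^sub>R w) = norm ((1/Np) *\<^sub>R z - ((1/Np) *\<^sub>R z - (1/Nq) *\<^sub>R w))" by simp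
  also have "\<dots> \<le> norm ((1/Np) *\<^sub>R z) + norm ((1/Np) *\<^sub>R z - (1/Nq) *\<^sub>R w)"
    by (rule norm_triangle_ineq4)
  finally have "norm ((1/Nq) *\<^sub>R w) \<le> norm ((1/Np) *\<^sub>R z) + norm ((1/Np) *\<^sub>R z - (1/Nq) *\<^sub>R w)" .
  moreover have "norm z / Np \<le> 15/100" using nz Np by (simp add: divide_le_eq)
  ultimately have wh: "norm w / Nq \<le> 16/100" using close(1) unfolding nzh nwh by linarith
  hence nw: "norm w \<le> 16/100 * Nq" using Nq by (simp add: divide_le_eq)
  have nw': "norm w \<le> 1616/10000 * r'" using nw Nql rr by linarith
  define th where "th = (1/Np)\<^sup>2*\<tau>"
  define qh where "qh = (1/Nq)\<^sup>2*\<sigma>"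
  have th1: "\<bar>th\<bar> \<le> 1" unfolding th_def using taule Np by (simp add: abs_mult power_divide divide_le_eq)
  have th2: "9801/10000 \<le> th\<^sup>2"
  proof -
    have "(99/100)\<^sup>2 \<le> \<bar>th\<bar>\<^sup>2" using tau unfolding th_def by (intro power_mono) auto
    thus ?thesis by (simp add: power_divide)
  qed
  have imh: "\<bar>Im (hinner ((1/Np) *\<^sub>R z) ((1/Nq) *\<^sub>R w))\<bar> \<le> 15/100 * (16/100)"
  proof -
    have "\<bar>Im (hinner ((1/Np) *\<^sub>R z) ((1/Nq) *\<^sub>R w))\<bar> \<le> norm ((1/Np) *\<^sub>R z) * norm ((1/Nq) *\<^sub>R w)"
      by (rule hinner_Im_le)
    also have "\<dots> \<le> 15/100 * (16/100)" unfolding nzh nwh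
      using nz Np Nq wh by (intro mult_mono) (auto simp: divide_le_eq)
    finally show ?thesis .
  qed
  have "\<bar>th - qh\<bar> \<le> 1/10000 + (15/100 * (16/100))/2"
    using close(2) imh unfolding th_def qh_def by (intro abs_aux1) auto
  hence thsh: "\<bar>th - qh\<bar> \<le> 121/10000" by simp
  have prod: "96/100 \<le> th * qh"
  proof -
    have "\<bar>th * (th - qh)\<bar> \<le> 1 * (121/10000)" unfolding abs_mult using th1 thsh by (intro mult_mono) auto
    moreover have "th * qh = th\<^sup>2 - th*(th - qh)" by (simp add: power2_eq_square algebra_simps)
    ultimately show ?thesis using th2 by (simp add: abs_le_iff)
  qed
  have tausig: "\<tau> * \<sigma> = (th * qh) * (Np\<^sup>2 * Nq\<^sup>2)" unfolding th_def qh_def using Np Nq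
    by (simp add: power_divide field_simps)
  have NN: "9604/10000 * P \<le> Np\<^sup>2 * Nq\<^sup>2"
  proof -
    have "(98/100 * r\<^sup>2) * (98/100 * r'\<^sup>2) \<le> Np\<^sup>2 * Nq\<^sup>2" using Np2l Nq2l by (intro mult_mono) auto
    thus ?thesis unfolding P_def by (simp add: algebra_simps)
  qed
  have ts_lower: "92/100 * P \<le> \<tau> * \<sigma>"
  proof -
    have "(96/100) * (9604/10000 * P) \<le> (th*qh) * (Np\<^sup>2 * Nq\<^sup>2)" by (rule mult_mono[OF prod NN]) (use prod P0 in auto)
    thus ?thesis using tausig P0 by simp
  qed

  have sigle: "\<bar>\<sigma>\<bar> \<le> Nq\<^sup>2"
  proof -
    have "\<sigma>\<^sup>2 \<le> (Nq\<^sup>2)\<^sup>2" using eqq by (simp add: power_mult[symmetric]) (smt (verit) mult_nonneg_nonneg zero_le_power2)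
    thus ?thesis by (metis abs_ge_zero power2_abs power2_le_imp_le zero_le_power2)
  qed
  have nw1w: "norm (w1 - w) \<le> 2*t" using b1(1) by (simp add: norm_minus_commute)
  have "norm w1 = norm (w + (w1 - w))" by simp
  also have "\<dots> \<le> norm w + norm (w1 - w)" by (rule norm_triangle_ineq)
  finally have nw1: "norm w1 \<le> 17/100 * r'" using nw' nw1w t1000 rr by linarith
  have q1a: "r\<^sup>2 * (norm w1)\<^sup>2 \<le> 289/10000 * P"
  proof -
    have "(norm w1)\<^sup>2 \<le> (17/100 * r')\<^sup>2" using nw1 by (intro power_mono) auto
    hence "(norm w1)\<^sup>2 \<le> 289/10000 * r'\<^sup>2" by (simp only: power_mult_distrib) (simp add: power_divide)
    hence "r\<^sup>2 * (norm w1)\<^sup>2 \<le> r\<^sup>2 * (289/10000 * r'\<^sup>2)" by (rule mult_left_mono) simp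
    thus ?thesis unfolding P_def by (simp add: algebra_simps)
  qed
  have Imww1: "\<bar>Im (hinner w w1)\<bar> \<le> 1616/10000 * r' * (2*t)"
  proof -
    have "hinner w w1 = hinner w (w1 - w) + hinner w w" by (simp add: hinner_diff_right)
    hence "Im (hinner w w1) = Im (hinner w (w1 - w))" by (simp add: hinner_self_Im)
    also have "\<bar>\<dots>\<bar> \<le> norm w * norm (w1 - w)" by (rule hinner_Im_le)
    also have "\<dots> \<le> 1616/10000 * r' * (2*t)" using nw' nw1w t0 rr by (intro mult_mono) auto
    finally show ?thesis .
  qed
  have tt2: "(2*t)\<^sup>2 \<le> 4/1000 * (r' * t)"
  proof -
    have "t * t \<le> (r'/1000) * t" by (rule mult_right_mono[OF t1000 t0])
    thus ?thesis by (simp add: power2_eq_square)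
  qed
  have D: "\<bar>h1 - \<sigma>\<bar> \<le> 17/100 * (r' * t)"
  proof -
    have "\<bar>h1 - \<sigma>\<bar> \<le> (2*t)\<^sup>2 + (1616/10000 * r' * (2*t))/2"
      using b1(2) Imww1 by (intro abs_aux2) auto
    moreover have "(1616/10000 * r' * (2*t))/2 = 1616/10000 * (r' * t)" by simp
    ultimately show ?thesis using tt2 by linarith
  qed
  have D': "\<bar>h1 - \<sigma>\<bar> \<le> 17/100000 * r'\<^sup>2"
  proof -
    have "17/100 * (r' * t) \<le> 17/100 * (r' * (r'/1000))" using t1000 rr by (intro mult_left_mono) auto
    thus ?thesis using D by (simp add: power2_eq_square)
  qed
  have q1c: "-2*\<tau>*h1 \<le> -(184/100)*P + 2*(103/100*r\<^sup>2)*(17/100000*r'\<^sup>2)"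
  proof -
    have "\<bar>\<tau>*(h1 - \<sigma>)\<bar> \<le> (103/100*r\<^sup>2)*(17/100000*r'\<^sup>2)" unfolding abs_mult
      using tau2 D' by (intro mult_mono) auto
    moreover have "-2*\<tau>*h1 = -2*(\<tau>*\<sigma>) - 2*(\<tau>*(h1 - \<sigma>))" by (simp add: algebra_simps)
    ultimately show ?thesis using ts_lower by (simp add: abs_le_iff)
  qed
  have h1b: "\<bar>h1\<bar> \<le> 104/100 * r'\<^sup>2" using sigle Nq2 D' abs_tri_aux[of h1 \<sigma>] zero_le_power2[of r'] by linarith
  have r'4: "r'\<^sup>2 * r'\<^sup>2 \<le> P/10000"
  proof -
    have "(100*r')\<^sup>2 \<le> r\<^sup>2" using r100 rr by (intro power_mono) auto
    hence "r'\<^sup>2 \<le> r\<^sup>2/10000" by (simp add: power_mult_distrib)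
    hence "r'\<^sup>2 * r'\<^sup>2 \<le> r'\<^sup>2 * (r\<^sup>2/10000)" by (rule mult_left_mono) simp
    thus ?thesis unfolding P_def by (simp add: algebra_simps)
  qed
  have h1sq: "h1\<^sup>2 \<le> 10816/10000 * (P/10000)"
  proof -
    have "h1\<^sup>2 \<le> (104/100 * r'\<^sup>2)\<^sup>2" using h1b by (rule sq_le_of)
    also have "\<dots> = 10816/10000 * (r'\<^sup>2 * r'\<^sup>2)" by (simp add: power2_eq_square)
    also have "\<dots> \<le> 10816/10000 * (P/10000)" using r'4 by (intro mult_left_mono) auto
    finally show ?thesis .
  qed
  have I1b: "\<bar>Im (hinner w1 z)\<bar> \<le> 17/100*r' * (16/100*r)"
  proof -
    have "\<bar>Im (hinner w1 z)\<bar> \<le> norm w1 * norm z" by (rule hinner_Im_le)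
    also have "\<dots> \<le> 17/100*r' * (16/100*r)" using nw1 nz' rr by (intro mult_mono) auto
    finally show ?thesis .
  qed
  have I1sq: "(Im (hinner w1 z))\<^sup>2 \<le> 73984/100000000 * P"
  proof -
    have "(Im (hinner w1 z))\<^sup>2 \<le> (17/100*r' * (16/100*r))\<^sup>2" using I1b by (rule sq_le_of)
    also have "\<dots> = 73984/100000000 * P" unfolding P_def by (simp add: power2_eq_square)
    finally show ?thesis .
  qed
  have q1b: "(h1 - 1/2*Im (hinner w1 z))\<^sup>2 \<le> 6/10000 * P"
  proof -
    have "(h1 - 1/2*Im (hinner w1 z))\<^sup>2 = (h1 - (Im (hinner w1 z))/2)\<^sup>2" by simp
    also have "\<dots> \<le> 2*h1\<^sup>2 + 1/2*(Im (hinner w1 z))\<^sup>2" by (rule sq_aux)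
    also have "\<dots> \<le> 6/10000 * P" using h1sq I1sq P0 by simp
    finally show ?thesis .
  qed
  define Q1 where "Q1 = r\<^sup>2*(norm w1)\<^sup>2 + (h1 - 1/2*Im (hinner w1 z))\<^sup>2 - 2*\<tau>*h1"
  define Q0 where "Q0 = r\<^sup>2*(norm w0)\<^sup>2 + (h0 - 1/2*Im (hinner w0 z))\<^sup>2 - 2*\<tau>*h0"
  have Q1b: "Q1 \<le> -(18/10) * P"
  proof -
    have "2*(103/100*r\<^sup>2)*(17/100000*r'\<^sup>2) = 3502/10000000 * P" unfolding P_def by simp
    thus ?thesis unfolding Q1_def using q1a q1b q1c P0 by simp
  qed
  have Q0b: "-(1/10000) * P \<le> Q0"
  proof -
    have "t\<^sup>2 \<le> (r'/1000)\<^sup>2" using t0 t1000 by (intro power_mono) auto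
    hence "r\<^sup>2 * t\<^sup>2 \<le> r\<^sup>2 * (r'/1000)\<^sup>2" by (rule mult_left_mono) simp
    hence rt: "r\<^sup>2 * t\<^sup>2 \<le> P/1000000" unfolding P_def by (simp add: power_divide)
    have "\<bar>\<tau>*h0\<bar> \<le> (103/100*r\<^sup>2) * (2*t)\<^sup>2" unfolding abs_mult using tau2 b0(2) by (intro mult_mono) auto
    hence "\<bar>\<tau>*h0\<bar> \<le> 412/100 * (r\<^sup>2 * t\<^sup>2)" by (simp add: power_mult_distrib)
    hence "-2*\<tau>*h0 \<ge> -(1/10000)*P" using rt by (simp add: abs_le_iff)
    moreover have "0 \<le> r\<^sup>2*(norm w0)\<^sup>2 + (h0 - 1/2*Im (hinner w0 z))\<^sup>2" by simp
    ultimately show ?thesis unfolding Q0_def by linarith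
  qed

  have csL: "\<forall>i. cmod (z$i) \<le> 11*T \<or> cmod (w$i) \<ge> 9*t"
  proof
    fix i
    from cs have "cmod (z$i)/Np < 10*T/r \<or> cmod (w$i)/Nq \<ge> 10*T/r'" by blast
    thus "cmod (z$i) \<le> 11*T \<or> cmod (w$i) \<ge> 9*t"
    proof
      assume "cmod (z$i)/Np < 10*T/r"
      hence "cmod (z$i) < 10*T/r * Np" using Np by (simp add: pos_divide_less_eq)
      also have "10*T/r*Np \<le> 10*T/r*(101/100*r)" using Npl T1 r0 by (intro mult_left_mono) auto
      also have "10*T/r*(101/100*r) = 101/10*T" using r0 by simp
      finally show ?thesis using T1 by simp
    next
      assume "cmod (w$i)/Nq \<ge> 10*T/r'"
      hence "10*T/r'*Nq \<le> cmod (w$i)" using Nq by (simp add: pos_le_divide_eq)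
      moreover have "10*T/r'*(99/100*r') \<le> 10*T/r'*Nq" using Nql T1 rr by (intro mult_left_mono) auto
      moreover have "10*T/r'*(99/100*r') = 99/10*T" using rr by simp
      ultimately have "99/10*T \<le> cmod (w$i)" by linarith
      thus ?thesis using tT T1 by linarith
    qed
  qed
  have tau2': "\<bar>\<tau>\<bar> \<le> 11/10 * r\<^sup>2" using tau2 zero_le_power2[of r] by linarith
  have Lb: "(\<Sum>i\<in>UNIV. lc (r\<^sup>2) \<tau> (z$i) (w1$i)) - (\<Sum>i\<in>UNIV. lc (r\<^sup>2) \<tau> (z$i) (w0$i)) \<le> c * (150 * r\<^sup>2 * T * t)"
    unfolding c_def by (rule core_L[OF zero_le_power2 tau2' ang csL nw1w b0(1) t0]) (use T1 in simp)
  have Lb2: "c * (150 * r\<^sup>2 * T * t) \<le> 15/100000 * P"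
  proof -
    have "(c*T) * t \<le> (r'/1000) * (r'/1000)" using cT t1000 c0 T1 t0 by (intro mult_mono) auto
    hence "150 * r\<^sup>2 * ((c*T) * t) \<le> 150 * r\<^sup>2 * ((r'/1000) * (r'/1000))" by (rule mult_left_mono) simp
    thus ?thesis unfolding P_def by (simp add: power2_eq_square algebra_simps)
  qed
  have e1: "r^4 = (norm z)\<^sup>2 * r\<^sup>2 + \<tau>\<^sup>2 + (\<Sum>i\<in>UNIV. lc (r\<^sup>2) \<tau> (z$i) (w1$i)) + Q1"
    using y1 identity_y[of w1 z r h1 \<tau>] Lsum_eq[of "r\<^sup>2" z w1 \<tau>] unfolding Q1_def by simp
  have e0: "r^4 = (norm z)\<^sup>2 * r\<^sup>2 + \<tau>\<^sup>2 + (\<Sum>i\<in>UNIV. lc (r\<^sup>2) \<tau> (z$i) (w0$i)) + Q0"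
    using y0 identity_y[of w0 z r h0 \<tau>] Lsum_eq[of "r\<^sup>2" z w0 \<tau>] unfolding Q0_def by simp
  show False using e1 e0 Lb Lb2 Q1b Q0b P0 by linarith
qed



lemma polar:
  fixes a b :: complex
  shows "Re (cnj a * b) = cmod a * cmod b * cos (Arg a - Arg b)"
    "Im (cnj b * a) = cmod a * cmod b * sin (Arg a - Arg b)"
proof -
  have ea: "a = of_real (cmod a) * cis (Arg a)" using rcis_cmod_Arg[of a] unfolding rcis_def by simp
  have eb: "b = of_real (cmod b) * cis (Arg b)" using rcis_cmod_Arg[of b] unfolding rcis_def by simp
  have "cnj a * b = of_real (cmod a * cmod b) * cis (Arg b - Arg a)"
    by (subst ea, subst eb) (simp add: cis_cnj cis_mult algebra_simps)
  thus "Re (cnj a * b) = cmod a * cmod b * cos (Arg a - Arg b)"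
    by (simp add: cos_diff mult.assoc)
  have "cnj b * a = of_real (cmod a * cmod b) * cis (Arg a - Arg b)"
    by (subst ea, subst eb) (simp add: cis_cnj cis_mult algebra_simps)
  thus "Im (cnj b * a) = cmod a * cmod b * sin (Arg a - Arg b)"
    by (simp add: mult.assoc)
qed

lemma ang_bounds:
  fixes a b :: complex
  assumes "cos (Arg a - Arg b) > 995/1000"
  shows "Re (cnj a * b) \<ge> 995/1000*(cmod a * cmod b)" "\<bar>Im (cnj b * a)\<bar> \<le> 1/10*(cmod a * cmod b)"
proof -
  define c where "c = cos (Arg a - Arg b)"
  define s where "s = sin (Arg a - Arg b)"
  have P0: "cmod a * cmod b \<ge> 0" by simp
  show "Re (cnj a * b) \<ge> 995/1000*(cmod a * cmod b)" unfolding polar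
    using mult_left_mono[of "995/1000" "cos (Arg a - Arg b)" "cmod a * cmod b"] assms P0
    by (simp add: mult.commute)
  have "s\<^sup>2 + c\<^sup>2 = 1" unfolding s_def c_def by simp
  moreover have "(995/1000)\<^sup>2 \<le> c\<^sup>2" using assms unfolding c_def by (intro power_mono) auto
  ultimately have "s\<^sup>2 \<le> (1/10)\<^sup>2" by (simp add: power_divide)
  hence "\<bar>s\<bar>\<^sup>2 \<le> (1/10)\<^sup>2" by simp
  hence "\<bar>s\<bar> \<le> 1/10" by (rule power2_le_imp_le) simp
  hence "\<bar>s\<bar> * (cmod a * cmod b) \<le> 1/10 * (cmod a * cmod b)" by (rule mult_right_mono) simp
  thus "\<bar>Im (cnj b * a)\<bar> \<le> 1/10*(cmod a * cmod b)" unfolding polar s_def[symmetric]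
    by (simp add: abs_mult mult.commute)
qed

lemma near:
  fixes w0 z :: "complex^'n::finite"
  assumes a: "nrm (w0,h0) \<le> a" and rho: "nrm (w0 - z, h0 - \<tau> - 1/2*Im (hinner w0 z)) = \<rho>"
    and "\<rho> > 0" "0 \<le> a" "a \<le> \<rho>"
  shows "\<bar>\<rho> - nrm (z,\<tau>)\<bar> \<le> 5*a"
proof -
  define N where "N = nrm (z,\<tau>)"
  have N0: "N \<ge> 0" unfolding N_def by (rule nrm_nonneg)
  have nw0: "norm w0 \<le> a" and h0: "\<bar>h0\<bar> \<le> a\<^sup>2" using nrm_le_imp[OF a] by auto
  have nzN: "norm z \<le> N"
  proof -
    have "(norm z)\<^sup>2 \<le> N\<^sup>2" using nrm_bounds(1)[of "(z,\<tau>)"] unfolding N_def by simp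
    thus ?thesis using N0 by (rule power2_le_imp_le)
  qed
  have NN: "N = nrm (-z, -\<tau>)" unfolding N_def by (simp add: nrm_neg)
  have lip: "\<bar>\<rho>\<^sup>2 - N\<^sup>2\<bar> \<le> \<bar>(norm (w0 - z))\<^sup>2 - (norm (-z))\<^sup>2\<bar> + \<bar>(h0 - \<tau> - 1/2*Im (hinner w0 z)) - (-\<tau>)\<bar>"
    using nrm_lip[of "(w0 - z, h0 - \<tau> - 1/2*Im (hinner w0 z))" "(-z, -\<tau>)"] unfolding rho NN by simp
  have "\<bar>Re (hinner z w0)\<bar> \<le> norm z * norm w0" by (rule hinner_Re_le)
  also have "\<dots> \<le> N * a" using nzN nw0 N0 by (intro mult_mono) auto
  finally have re: "\<bar>Re (hinner z w0)\<bar> \<le> N * a" .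
  have "\<bar>Im (hinner w0 z)\<bar> \<le> norm w0 * norm z" by (rule hinner_Im_le)
  also have "\<dots> \<le> a * N" using nzN nw0 N0 assms by (intro mult_mono) auto
  finally have im: "\<bar>Im (hinner w0 z)\<bar> \<le> a * N" .
  have na2: "(norm w0)\<^sup>2 \<le> a\<^sup>2" using nw0 by (intro power_mono) auto
  have t1: "\<bar>(norm (w0 - z))\<^sup>2 - (norm (-z))\<^sup>2\<bar> \<le> a\<^sup>2 + 2*(N*a)"
  proof -
    have e: "(norm (w0 - z))\<^sup>2 - (norm (-z))\<^sup>2 = (norm w0)\<^sup>2 - 2*Re (hinner z w0)" unfolding norm_diff_sq by simp
    have "Re (hinner z w0) \<le> N * a" "- Re (hinner z w0) \<le> N * a" using re unfolding abs_le_iff by auto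
    thus ?thesis unfolding e abs_le_iff using na2 zero_le_power2[of "norm w0"] zero_le_power2[of a] by linarith
  qed
  have t2: "\<bar>(h0 - \<tau> - 1/2*Im (hinner w0 z)) - (-\<tau>)\<bar> \<le> a\<^sup>2 + 1/2*(a*N)"
    using h0 im by (simp add: abs_le_iff)
  have "\<rho>\<^sup>2 - N\<^sup>2 = (\<rho> - N)*(\<rho>+N)" by (simp add: power2_eq_square algebra_simps)
  hence "\<bar>\<rho>\<^sup>2 - N\<^sup>2\<bar> = \<bar>\<rho> - N\<bar> * (\<rho> + N)" using N0 assms by (simp add: abs_mult)
  hence "\<bar>\<rho> - N\<bar> * (\<rho> + N) = \<bar>\<rho>\<^sup>2 - N\<^sup>2\<bar>" by simp
  also have "\<dots> \<le> 2*a\<^sup>2 + 5/2*(a*N)" using lip t1 t2 by (simp add: algebra_simps)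
  also have "\<dots> \<le> 5*a * (\<rho> + N)"
  proof -
    have "a*a \<le> a*\<rho>" using assms by (intro mult_left_mono) auto
    moreover have "0 \<le> a*N" using assms N0 by simp
    moreover have "5*a*(\<rho>+N) = 5*(a*\<rho>) + 5*(a*N)" by (simp add: algebra_simps)
    moreover have "a\<^sup>2 = a*a" by (simp add: power2_eq_square)
    moreover have "0 \<le> a*\<rho>" using assms by simp
    ultimately show ?thesis by linarith
  qed
  finally have "\<bar>\<rho> - N\<bar> * (\<rho> + N) \<le> 5*a * (\<rho> + N)" .
  moreover have "\<rho> + N > 0" using assms N0 by simp
  ultimately show ?thesis unfolding N_def by simp
qed

lemma shell_pt:
  fixes x p :: "'n::finite heis"
  assumes "x \<in> hshell t r p" "r > 0"
  shows "\<exists>y. hdist y p = r \<and> hdist x y < t + 1"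
proof -
  define y0 where "y0 = (fst p, snd p + r\<^sup>2)"
  have "hmult y0 (hinv p) = (0, r\<^sup>2)"
    unfolding y0_def hmult_def hinv_def by (simp add: hinner_minus_right hinner_self_Im)
  hence "hdist y0 p = r" unfolding hdist_nrm using nrm_vert[of r] assms(2) by simp
  hence ne: "hsphere r p \<noteq> {}" unfolding hsphere_def by blast
  have "Inf ((\<lambda>y. hdist x y) ` hsphere r p) < t + 1" using assms(1) unfolding hshell_def hsetdist_def by simp
  then obtain y where "y \<in> hsphere r p" "hdist x y < t + 1" using cInf_lessD[of "(\<lambda>y. hdist x y) ` hsphere r p"] ne by blast
  thus ?thesis unfolding hsphere_def by blast
qed




lemma hmult_pair: "hmult (a,b) (hinv (z,\<tau>)) = (a - z, b - \<tau> - 1/2*Im (hinner a z))"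
  unfolding hmult_def hinv_def by (simp add: hinner_minus_right)

lemma hdist_pair: "hdist (a,b) (z,\<tau>) = nrm (a - z, b - \<tau> - 1/2*Im (hinner a z))"
  unfolding hdist_nrm hmult_pair ..

lemma hdist_zero_left: "hdist hzero (a,b) = nrm (a,b)"
proof -
  have "hmult hzero (hinv (a,b)) = (-a, -b)" unfolding hmult_def hinv_def hzero_def by (simp add: hinner_zero_left)
  thus ?thesis unfolding hdist_nrm by (simp add: nrm_neg)
qed

lemma hdist_zero_right: "hdist (a,b) hzero = nrm (a,b)"
proof -
  have "hmult (a,b) (hinv hzero) = (a, b)" unfolding hmult_def hinv_def hzero_def by (simp add: hinner_zero_right)
  thus ?thesis unfolding hdist_nrm by simp
qed

lemma hhat_pair: "hhat (z,\<tau>) = ((1/nrm (z,\<tau>)) *\<^sub>R z, (1/nrm (z,\<tau>))\<^sup>2 * \<tau>)"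
  unfolding hhat_def hdil_def hdist_zero_right by simp

lemma main:
  fixes p q :: "'n::finite heis"
  assumes pz: "p \<noteq> hzero" and qz: "q \<noteq> hzero" and t1: "t \<ge> 1" and t'1: "t' \<ge> 1" and R1: "R > 1"
    and TT: "T \<ge> t * t'" and e0: "0 < \<epsilon>" and e1: "\<epsilon> < 1" and rr': "r \<ge> r'" and r'TR: "r' \<ge> T * R"
    and r'e: "r' \<le> \<epsilon> * r" and qsh: "q \<in> hshell t r p" and zsh: "hzero \<in> hshell t r p \<inter> hshell t' r' q"
    and RR: "R > 1000 * (real CARD('n) + 1)" and eb: "\<epsilon> < 1/100" and tau: "\<bar>htau p\<bar> \<ge> 99/100"
    and ang: "\<forall>i. hphi2 p q i < arccos (995/1000)"
  shows "(\<exists>i. i \<notin> {j. hrho p j < 10 * T / r} \<and> hrho q i < 10 * T / r') \<or> hdist (hhat p) (hhat q) > 1/100"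
proof (rule ccontr)
  assume neg: "\<not> ?thesis"
  hence ncs: "\<forall>i. hrho p i < 10*T/r \<or> hrho q i \<ge> 10*T/r'" and nd: "hdist (hhat p) (hhat q) \<le> 1/100"
    by auto
  obtain z \<tau> where p: "p = (z,\<tau>)" by (cases p)
  obtain w \<sigma> where q: "q = (w,\<sigma>)" by (cases q)
  define Np where "Np = nrm (z,\<tau>)"
  define Nq where "Nq = nrm (w,\<sigma>)"
  have Np: "Np > 0" using pz nrm_nonneg[of "(z,\<tau>)"] nrm_zero_iff[of "(z,\<tau>)"] unfolding Np_def p hzero_def by auto
  have Nq: "Nq > 0" using qz nrm_nonneg[of "(w,\<sigma>)"] nrm_zero_iff[of "(w,\<sigma>)"] unfolding Nq_def q hzero_def by auto
  have hp: "hhat p = ((1/Np) *\<^sub>R z, (1/Np)\<^sup>2 * \<tau>)" unfolding p Np_def by (rule hhat_pair)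
  have hq: "hhat q = ((1/Nq) *\<^sub>R w, (1/Nq)\<^sup>2 * \<sigma>)" unfolding q Nq_def by (rule hhat_pair)
  have T1: "T \<ge> 1" using TT t1 t'1 mult_mono[of 1 t 1 t'] by simp
  have "1000 * (real CARD('n) + 1) \<ge> 1000" by simp
  hence R1000: "R \<ge> 1000" using RR by linarith
  have "T * 1000 \<le> T * R" using R1000 T1 by (intro mult_left_mono) auto
  hence r'1000: "r' \<ge> 1000 * T" using r'TR by simp
  have r'0: "r' > 0" using r'1000 T1 by simp
  have r0: "r > 0" using rr' r'0 by simp
  have "t*1 \<le> t*t'" by (rule mult_left_mono[OF t'1]) (use t1 in simp)
  hence tT: "t \<le> T" using TT by linarith
  have "1*t' \<le> t*t'" by (rule mult_right_mono[OF t1]) (use t'1 in simp)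
  hence t'T: "t' \<le> T" using TT by linarith
  obtain y1 where y1: "hdist y1 p = r" "hdist q y1 < t + 1" using shell_pt[OF qsh r0] by blast
  obtain y0 where y0: "hdist y0 p = r" "hdist hzero y0 < t + 1" using shell_pt[of hzero t r p] zsh r0 by blast
  obtain y2 where y2: "hdist y2 q = r'" "hdist hzero y2 < t' + 1" using shell_pt[of hzero t' r' q] zsh r'0 by blast
  obtain w0 h0 where y0p: "y0 = (w0,h0)" by (cases y0)
  obtain w1 h1 where y1p: "y1 = (w1,h1)" by (cases y1)
  obtain w2 h2 where y2p: "y2 = (w2,h2)" by (cases y2)
  have d0: "nrm (w0 - z, h0 - \<tau> - 1/2*Im (hinner w0 z)) = r" using y0(1) unfolding y0p p hdist_pair .
  have d1: "nrm (w1 - z, h1 - \<tau> - 1/2*Im (hinner w1 z)) = r" using y1(1) unfolding y1p p hdist_pair .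
  have d2: "nrm (w2 - w, h2 - \<sigma> - 1/2*Im (hinner w2 w)) = r'" using y2(1) unfolding y2p q hdist_pair .
  have n0: "nrm (w0,h0) \<le> 2*t" using y0(2) t1 unfolding y0p hdist_zero_left by simp
  have n2: "nrm (w2,h2) \<le> 2*t'" using y2(2) t'1 unfolding y2p hdist_zero_left by simp
  have n1: "nrm (w - w1, \<sigma> - h1 - 1/2*Im (hinner w w1)) \<le> 2*t" using y1(2) t1 unfolding y1p q hdist_pair by simp
  have eq0: "(norm (w0 - z))\<^sup>2 * r\<^sup>2 + (h0 - \<tau> - 1/2*Im (hinner w0 z))\<^sup>2 = r^4"
    using nrm_eq[of "(w0 - z, h0 - \<tau> - 1/2*Im (hinner w0 z))"] unfolding d0 by simp
  have eq1: "(norm (w1 - z))\<^sup>2 * r\<^sup>2 + (h1 - \<tau> - 1/2*Im (hinner w1 z))\<^sup>2 = r^4"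
    using nrm_eq[of "(w1 - z, h1 - \<tau> - 1/2*Im (hinner w1 z))"] unfolding d1 by simp
  have eqp: "(norm z)\<^sup>2 * Np\<^sup>2 + \<tau>\<^sup>2 = Np^4" using nrm_eq[of "(z,\<tau>)"] unfolding Np_def by simp
  have eqq: "(norm w)\<^sup>2 * Nq\<^sup>2 + \<sigma>\<^sup>2 = Nq^4" using nrm_eq[of "(w,\<sigma>)"] unfolding Nq_def by simp
  have b0: "norm w0 \<le> 2*t" "\<bar>h0\<bar> \<le> (2*t)\<^sup>2" using nrm_le_imp[OF n0] by auto
  have b1: "norm (w - w1) \<le> 2*t" "\<bar>\<sigma> - h1 - 1/2*Im (hinner w w1)\<bar> \<le> (2*t)\<^sup>2" using nrm_le_imp[OF n1] by auto
  have np: "\<bar>r - Np\<bar> \<le> 10*t"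
    using near[OF n0 d0 r0] t1 tT r'1000 rr' unfolding Np_def by simp
  have nq: "\<bar>r' - Nq\<bar> \<le> 10*t'"
    using near[OF n2 d2 r'0] t'1 t'T r'1000 unfolding Nq_def by simp
  have K: "1000*(real CARD('n)+1)*T \<le> r'"
  proof -
    have "T * (1000*(real CARD('n)+1)) \<le> T * R" using RR T1 by (intro mult_left_mono) auto
    thus ?thesis using r'TR by (simp add: mult.commute)
  qed
  have tau': "\<bar>(1/Np)\<^sup>2*\<tau>\<bar> \<ge> 99/100" using tau unfolding htau_def hp by simp
  have nd': "nrm ((1/Np) *\<^sub>R z - (1/Nq) *\<^sub>R w, (1/Np)\<^sup>2*\<tau> - (1/Nq)\<^sup>2*\<sigma> - 1/2*Im (hinner ((1/Np) *\<^sub>R z) ((1/Nq) *\<^sub>R w))) \<le> 1/100"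
    using nd unfolding hp hq hdist_pair .
  have close: "norm ((1/Np) *\<^sub>R z - (1/Nq) *\<^sub>R w) \<le> 1/100"
      "\<bar>(1/Np)\<^sup>2*\<tau> - (1/Nq)\<^sup>2*\<sigma> - 1/2*Im (hinner ((1/Np) *\<^sub>R z) ((1/Nq) *\<^sub>R w))\<bar> \<le> 1/10000"
    using nrm_le_imp[OF nd'] by (auto simp: power_divide)
  have ang': "\<forall>i. Re (cnj (z$i) * (w$i)) \<ge> 995/1000*(cmod (z$i) * cmod (w$i)) \<and> \<bar>Im (cnj (w$i) * (z$i))\<bar> \<le> 1/10*(cmod (z$i) * cmod (w$i))"
  proof
    fix i
    have Az: "hphi p i = Arg (z$i)" unfolding hphi_def hp fst_conv vector_scaleR_component using Np by (simp add: scaleR_conv_of_real)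
    have Aw: "hphi q i = Arg (w$i)" unfolding hphi_def hq fst_conv vector_scaleR_component using Nq by (simp add: scaleR_conv_of_real)
    have "arccos (cos (Arg (z$i) - Arg (w$i))) < arccos (995/1000)" using ang Az Aw unfolding hphi2_def by metis
    hence "cos (Arg (z$i) - Arg (w$i)) > 995/1000" using arccos_less_mono[of "cos (Arg (z$i) - Arg (w$i))" "995/1000"]
      by simp
    thus "Re (cnj (z$i) * (w$i)) \<ge> 995/1000*(cmod (z$i) * cmod (w$i)) \<and> \<bar>Im (cnj (w$i) * (z$i))\<bar> \<le> 1/10*(cmod (z$i) * cmod (w$i))"
      using ang_bounds by blast
  qed
  have cs: "\<forall>i. cmod (z$i)/Np < 10*T/r \<or> cmod (w$i)/Nq \<ge> 10*T/r'"
  proof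
    fix i
    have "hrho p i = cmod (z$i)/Np" unfolding hrho_def hp using Np by simp
    moreover have "hrho q i = cmod (w$i)/Nq" unfolding hrho_def hq using Nq by simp
    ultimately show "cmod (z$i)/Np < 10*T/r \<or> cmod (w$i)/Nq \<ge> 10*T/r'" using ncs by metis
  qed
  show False
    by (rule core[OF Np Nq eqp eqq eq0 eq1 b0 b1 np nq t1 t'1 TT K r'e _ e0 r'0 tau' close ang' cs]) (use eb in simp)
qed


theorem lemma13:
  shows "\<exists>\<tau>b \<rho>b Rb \<phi>b \<epsilon>b. 1/2 < \<tau>b \<and> \<tau>b < 1 \<and> \<rho>b > 0 \<and> Rb > 0 \<and> \<phi>b > 0 \<and> \<epsilon>b > 0 \<and>
    (\<forall>(p :: 'n::finite heis) q t t' R T \<epsilon> r r'.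
      p \<noteq> hzero \<longrightarrow> q \<noteq> hzero \<longrightarrow> t \<ge> 1 \<longrightarrow> t' \<ge> 1 \<longrightarrow> R > 1 \<longrightarrow> T \<ge> t * t' \<longrightarrow>
      0 < \<epsilon> \<longrightarrow> \<epsilon> < 1 \<longrightarrow> r \<ge> r' \<longrightarrow> r' \<ge> T * R \<longrightarrow> r' \<le> \<epsilon> * r \<longrightarrow>
      q \<in> hshell t r p \<longrightarrow> hzero \<in> hshell t r p \<inter> hshell t' r' q \<longrightarrow>
      R > Rb \<longrightarrow> \<epsilon> < \<epsilon>b \<longrightarrow> \<bar>htau p\<bar> \<ge> \<tau>b \<longrightarrow> (\<forall>i. hphi2 p q i < \<phi>b) \<longrightarrow>
      (\<exists>i. i \<notin> {j. hrho p j < 10 * T / r} \<and> hrho q i < 10 * T / r') \<or>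
      hdist (hhat p) (hhat q) > \<rho>b)"
proof -
  have phi: "arccos (995/1000) > 0" using arccos_less_arccos[of "995/1000" 1] by simp
  show ?thesis
    apply (rule exI[of _ "99/100"], rule exI[of _ "1/100"], rule exI[of _ "1000 * (real CARD('n) + 1)"],
        rule exI[of _ "arccos (995/1000)"], rule exI[of _ "1/100"])
    apply (intro conjI allI impI)
    prefer 7
    apply (rule main; assumption)
    using phi by simp_all
qed

end
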